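(* Let $A \in \mathbb{R}^{m \times n_A}$ and $B \in \mathbb{R}^{m \times n_B}$, whose columns are unit vectors. Let $0<\delta<1$, and let $S, T$ be sets of columns of $B$ with $f_A(S) \ge f_A(T)$, $f_A(S)>0$ and $|S| \le k$. Let $R$ be a subset of size $\frac{n_B \log(1/\delta)}{k}$ drawn uniformly at random from the columns of $B$ not in $T$. Then $$\mathbb{E}\Big[\max_{v \in R}\big(f_A(T \cup \{v\}) - f_A(T)\big)\Big] \ge (1-\delta)\, \sigma_{\min}(S)\, \frac{\big(f_A(S) - f_A(T)\big)^2}{4k\, f_A(S)}.$$
   Context: For a finite set $V$ of vectors in $\mathbb{R}^m$, $\Pi_V$ is the orthogonal projector onto $\mathrm{span}(V)$ and, for a matrix $M$ with $m$ rows, $f_M(V) = \|\Pi_V M\|_F^2$. For a finite set $V$ of unit vectors, $\sigma_{\min}(V)$ is the smallest squared singular value of the matrix with columns $V$. *)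

theory Defs
  imports "HOL-Analysis.Analysis"
begin

definition orth_proj :: "('a::euclidean_space) set \<Rightarrow> 'a \<Rightarrow> 'a" where
  "orth_proj V x = (THE p. p \<in> span V \<and> (\<forall>y\<in>span V. inner (x - p) y = 0))"

text \<open>f_M(V) = squared Frobenius norm of Pi_V M, written column by column.\<close>
definition fM :: "real^'n^'m \<Rightarrow> (real^'m) set \<Rightarrow> real" where
  "fM M V = (\<Sum>j\<in>UNIV. (norm (orth_proj V (column j M)))\<^sup>2)"

text \<open>Smallest squared singular value of the matrix whose columns are the
  (finitely many) vectors of V: min over unit coefficient vectors x of |Mx|^2.\<close>
definition sigma_min :: "('a::euclidean_space) set \<Rightarrow> real" where
  "sigma_min V = Inf {(norm (\<Sum>v\<in>V. x v *\<^sub>R v))\<^sup>2 | x. (\<Sum>v\<in>V. (x v)\<^sup>2) = 1}"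

definition cols :: "real^'n^'m \<Rightarrow> (real^'m) set" where
  "cols M = {column j M | j. True}"

end

theory Submission imports Defs begin

lemma orth_proj_char:
  fixes V :: "'a::euclidean_space set"
  shows "orth_proj V x \<in> span V \<and> (\<forall>y\<in>span V. inner (x - orth_proj V x) y = 0)"
proof -
  obtain p z where p: "p \<in> span V" "\<And>w. w \<in> span V \<Longrightarrow> orthogonal z w" "x = p + z"
    using orthogonal_subspace_decomp_exists by blast
  have ex: "p \<in> span V \<and> (\<forall>y\<in>span V. inner (x - p) y = 0)"
    using p by (simp add: orthogonal_def)
  have uq: "q = p" if q: "q \<in> span V \<and> (\<forall>y\<in>span V. inner (x - q) y = 0)" for q
  proof -
    have "p - q \<in> span V" using q p by (simp add: span_diff)
    hence "inner (x - q) (p - q) = 0" "inner (x - p) (p - q) = 0" using q ex by auto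
    hence "inner (p - q) (p - q) = 0" by (simp add: inner_diff_left inner_diff_right)
    thus ?thesis by simp
  qed
  show ?thesis unfolding orth_proj_def
    by (rule theI[where a=p]) (use ex uq in blast)+
qed

lemma op_in: "orth_proj V x \<in> span V" using orth_proj_char by blast
lemma op_orth: "y \<in> span V \<Longrightarrow> inner (x - orth_proj V x) y = 0" using orth_proj_char by blast
lemma op_inner: "y \<in> span V \<Longrightarrow> inner (orth_proj V x) y = inner x y"
  using op_orth[of y V x] by (simp add: inner_diff_left)
lemma op_norm2: "(norm (orth_proj V x))\<^sup>2 = inner x (orth_proj V x)"
  using op_inner[OF op_in, of V x x] by (simp add: power2_norm_eq_inner)
lemma op_pyth: "(norm x)\<^sup>2 = (norm (orth_proj V x))\<^sup>2 + (norm (x - orth_proj V x))\<^sup>2"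
proof -
  have "inner (x - orth_proj V x) (orth_proj V x) = 0" by (rule op_orth[OF op_in])
  thus ?thesis unfolding power2_norm_eq_inner
    by (simp add: inner_diff_left inner_diff_right inner_commute algebra_simps)
qed
lemma op_norm_le: "norm (orth_proj V x) \<le> norm x"
  using op_pyth[of x V] by (smt (verit) norm_ge_zero power2_le_imp_le zero_le_power2)

lemma gain_lower:
  fixes a v :: "'a::euclidean_space"
  assumes "norm v \<le> 1"
  shows "(norm (orth_proj (T \<union> {v}) a))\<^sup>2 - (norm (orth_proj T a))\<^sup>2
         \<ge> (inner (a - orth_proj T a) v)\<^sup>2"
proof -
  define p where "p = orth_proj T a"
  define q where "q = orth_proj (T \<union> {v}) a"
  define w where "w = v - orth_proj T v"
  have spT: "span T \<subseteq> span (T \<union> {v})" by (rule span_mono) blast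
  have pT: "p \<in> span T" unfolding p_def by (rule op_in)
  have pT': "p \<in> span (T \<union> {v})" using pT spT by blast
  have wT': "w \<in> span (T \<union> {v})" unfolding w_def
  proof (rule span_diff)
    show "v \<in> span (T \<union> {v})" by (rule span_base) blast
    show "orth_proj T v \<in> span (T \<union> {v})" using op_in[of T v] spT by blast
  qed
  have e1: "inner q p = inner a p" unfolding q_def by (rule op_inner[OF pT'])
  have e2: "inner a p = inner p p" unfolding p_def using op_inner[OF op_in, of T a a] 
    by (simp add: inner_commute)
  have sq: "(norm q)\<^sup>2 - (norm p)\<^sup>2 = (norm (q - p))\<^sup>2"
    unfolding power2_norm_eq_inner using e1 e2
    by (simp add: inner_diff_left inner_diff_right inner_commute)
  have wp: "inner w p = 0" unfolding w_def by (rule op_orth[OF pT])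
  have e3: "inner q w = inner a w" unfolding q_def by (rule op_inner[OF wT'])
  have e4: "inner a (orth_proj T v) = inner p v"
  proof -
    have "inner a (orth_proj T v) = inner p (orth_proj T v)"
      unfolding p_def using op_inner[OF op_in, of T a v] by (simp add: inner_commute)
    also have "\<dots> = inner p v" using wp unfolding w_def
      by (simp add: inner_diff_right inner_commute)
    finally show ?thesis .
  qed
  have key: "inner (q - p) w = inner (a - p) v"
    using e3 wp e4 unfolding w_def
    by (simp add: inner_diff_left inner_diff_right inner_commute)
  have nw: "norm w \<le> 1"
    using op_pyth[of v T] assms unfolding w_def
    by (smt (verit) norm_ge_zero power2_le_imp_le zero_le_power2 one_power2 power_mono)
  have "(inner (q - p) w)\<^sup>2 \<le> (norm (q - p) * norm w)\<^sup>2"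
    using Cauchy_Schwarz_ineq2[of "q-p" w] abs_le_square_iff
    by (metis abs_of_nonneg norm_ge_zero zero_le_mult_iff power2_abs)
  also have "\<dots> \<le> (norm (q - p))\<^sup>2"
  proof -
    have "(norm w)\<^sup>2 \<le> 1" using nw by (simp add: power_le_one)
    thus ?thesis by (simp add: power_mult_distrib mult_left_le)
  qed
  finally show ?thesis using sq key unfolding p_def q_def by simp
qed


lemma sigma_min_le:
  fixes S :: "'a::euclidean_space set"
  assumes "(\<Sum>v\<in>S. (x v)\<^sup>2) = 1"
  shows "sigma_min S \<le> (norm (\<Sum>v\<in>S. x v *\<^sub>R v))\<^sup>2"
  unfolding sigma_min_def
  by (rule cInf_lower) (use assms in \<open>auto intro!: bdd_belowI[where m=0]\<close>)

lemma stepB: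
  fixes S :: "'a::euclidean_space set" and c :: 'a
  assumes fin: "finite S"
  shows "sigma_min S * (norm (orth_proj S c))\<^sup>2 \<le> (\<Sum>v\<in>S. (inner c v)\<^sup>2)"
proof -
  define z where "z = orth_proj S c"
  define Q where "Q = (\<Sum>v\<in>S. (inner c v)\<^sup>2)"
  define \<sigma> where "\<sigma> = sigma_min S"
  have Q0: "Q \<ge> 0" unfolding Q_def by (simp add: sum_nonneg)
  have "z \<in> span S" unfolding z_def by (rule op_in)
  then obtain x where zx: "z = (\<Sum>v\<in>S. x v *\<^sub>R v)" using span_finite[OF fin] by auto
  define X where "X = (\<Sum>v\<in>S. (x v)\<^sup>2)"
  define N where "N = (norm z)\<^sup>2"
  have N0: "N \<ge> 0" unfolding N_def by simp
  have Nin: "N = (\<Sum>v\<in>S. x v * inner c v)"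
  proof -
    have "N = inner c z" unfolding N_def z_def by (rule op_norm2)
    also have "\<dots> = (\<Sum>v\<in>S. x v * inner c v)" unfolding zx by (simp add: inner_sum_right)
    finally show ?thesis .
  qed
  have CS: "N\<^sup>2 \<le> X * Q" unfolding Nin X_def Q_def by (rule Cauchy_Schwarz_ineq_sum)
  show ?thesis
  proof (cases "X = 0")
    case True
    hence "\<forall>v\<in>S. x v = 0" unfolding X_def using sum_nonneg_eq_0_iff[OF fin, of "\<lambda>v. (x v)\<^sup>2"] by simp
    hence "z = 0" unfolding zx by simp
    thus ?thesis using Q0 unfolding Q_def z_def by simp
  next
    case False
    have X0: "X > 0" using False unfolding X_def by (metis sum_nonneg zero_le_power2 order_neq_le_trans)
    define y where "y v = x v / sqrt X" for v
    have "(\<Sum>v\<in>S. (y v)\<^sup>2) = (\<Sum>v\<in>S. (x v)\<^sup>2 / X)" unfolding y_def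
      using X0 by (simp add: power_divide)
    also have "\<dots> = 1" using X0 unfolding X_def[symmetric] by (simp add: sum_divide_distrib[symmetric] X_def)
    finally have "\<sigma> \<le> (norm (\<Sum>v\<in>S. y v *\<^sub>R v))\<^sup>2" unfolding \<sigma>_def by (rule sigma_min_le)
    also have "(\<Sum>v\<in>S. y v *\<^sub>R v) = (1 / sqrt X) *\<^sub>R z" unfolding zx y_def
      by (simp add: scaleR_sum_right divide_inverse mult.commute)
    also have "(norm ((1 / sqrt X) *\<^sub>R z))\<^sup>2 = N / X" unfolding N_def using X0
      by (simp add: power_mult_distrib power_divide)
    finally have sX: "\<sigma> * X \<le> N" using X0 by (simp add: pos_le_divide_eq)
    show ?thesis
    proof (cases "\<sigma> \<le> 0 \<or> N = 0")
      case True
      thus ?thesis using Q0 N0 unfolding \<sigma>_def[symmetric] Q_def[symmetric] N_def[symmetric] z_def[symmetric]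
        by (metis mult_nonpos_nonneg mult_zero_right order_trans)
    next
      case False
      hence s0: "\<sigma> > 0" and Np: "N > 0" using N0 by auto
      have "\<sigma> * N * N \<le> \<sigma> * (X * Q)" using CS s0 by (simp add: power2_eq_square mult.assoc)
      also have "\<dots> = (\<sigma> * X) * Q" by simp
      also have "\<dots> \<le> N * Q" using sX Q0 by (rule mult_right_mono)
      finally have "(\<sigma> * N) * N \<le> Q * N" by (simp add: mult.commute)
      hence "\<sigma> * N \<le> Q" using Np by simp
      thus ?thesis unfolding \<sigma>_def N_def z_def Q_def .
    qed
  qed
qed

lemma stepC:
  fixes a :: "'j::finite \<Rightarrow> 'a::euclidean_space" and S T :: "'a set"
  defines "fS \<equiv> (\<Sum>j\<in>UNIV. (norm (orth_proj S (a j)))\<^sup>2)"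
  defines "fT \<equiv> (\<Sum>j\<in>UNIV. (norm (orth_proj T (a j)))\<^sup>2)"
  defines "g \<equiv> (\<Sum>j\<in>UNIV. (norm (orth_proj S (a j - orth_proj T (a j))))\<^sup>2)"
  assumes "fT \<le> fS" "0 < fS"
  shows "(fS - fT)\<^sup>2 / (4 * fS) \<le> g"
proof -
  have pj: "(norm (orth_proj S (a j)))\<^sup>2 - (norm (orth_proj T (a j)))\<^sup>2
      \<le> 2 * (norm (orth_proj S (a j)) * norm (orth_proj S (a j - orth_proj T (a j))))" for j
  proof -
    define ps where "ps = orth_proj S (a j)"
    define pt where "pt = orth_proj T (a j)"
    define d where "d = a j - pt"
    have i1: "inner ps (a j) = (norm ps)\<^sup>2" unfolding ps_def using op_norm2[of S "a j"]
      by (simp add: inner_commute)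
    have i2: "inner ps pt \<le> norm ps * norm pt" by (rule norm_cauchy_schwarz)
    have i3: "norm ps * norm pt \<le> ((norm ps)\<^sup>2 + (norm pt)\<^sup>2) / 2"
      using sum_squares_bound[of "norm ps" "norm pt"] by (simp add: power2_eq_square)
    have psS: "ps \<in> span S" unfolding ps_def by (rule op_in)
    have i4: "inner ps d = inner (orth_proj S d) ps"
      using op_inner[OF psS, of d] by (simp add: inner_commute)
    have i5: "inner (orth_proj S d) ps \<le> norm (orth_proj S d) * norm ps" by (rule norm_cauchy_schwarz)
    have "inner ps d = (norm ps)\<^sup>2 - inner ps pt" unfolding d_def using i1 by (simp add: inner_diff_right)
    thus ?thesis using i2 i3 i4 i5 unfolding ps_def[symmetric] pt_def[symmetric] d_def[symmetric]
      by (simp add: mult.commute)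
  qed
  have "fS - fT \<le> 2 * (\<Sum>j\<in>UNIV. norm (orth_proj S (a j)) * norm (orth_proj S (a j - orth_proj T (a j))))"
    unfolding fS_def fT_def sum_subtractf[symmetric] sum_distrib_left by (rule sum_mono) (rule pj)
  hence "(fS - fT)\<^sup>2 \<le> 4 * (\<Sum>j\<in>UNIV. norm (orth_proj S (a j)) * norm (orth_proj S (a j - orth_proj T (a j))))\<^sup>2"
    (is "_ \<le> 4 * ?Y\<^sup>2")
  proof -
    assume h: "fS - fT \<le> 2 * ?Y"
    have "(fS - fT)\<^sup>2 \<le> (2 * ?Y)\<^sup>2" using h assms(4) by (intro power_mono) auto
    thus ?thesis by (simp add: power_mult_distrib)
  qed
  also have "\<dots> \<le> 4 * (fS * g)" unfolding fS_def g_def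
    using Cauchy_Schwarz_ineq_sum by (simp add: power_mult_distrib)
  finally show ?thesis using assms(5) by (simp add: pos_divide_le_eq mult.commute mult.left_commute)
qed


definition sw :: "'a \<Rightarrow> 'a \<Rightarrow> 'a \<Rightarrow> 'a" where
  "sw a b x = (if x = a then b else if x = b then a else x)"

lemma sw_sw [simp]: "sw a b (sw a b x) = x" by (simp add: sw_def)
lemma sw_inj: "inj (sw a b)" by (metis injI sw_sw)
lemma sw_img: "a \<in> A \<Longrightarrow> b \<in> A \<Longrightarrow> sw a b ` A = A"
  by (auto simp: sw_def image_iff)

lemma sym_count:
  fixes U S' :: "'a set" and r :: nat
  assumes fin: "finite U" and SU: "S' \<subseteq> U" and v: "v \<in> S'" and w: "w \<in> S'"
  defines "F \<equiv> {R. R \<subseteq> U \<and> card R = r}"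
  shows "(\<Sum>R\<in>F. if v \<in> R then 1 / real (card (R \<inter> S')) else 0)
       = (\<Sum>R\<in>F. if w \<in> R then 1 / real (card (R \<inter> S')) else 0)"
proof -
  let ?t = "sw v w"
  let ?P = "\<lambda>R. ?t ` R"
  have tU: "?t ` U = U" using SU v w by (intro sw_img) auto
  have tS: "?t ` S' = S'" using v w by (intro sw_img) auto
  have PP: "?P (?P R) = R" for R by (simp add: image_image)
  have PF: "?P R \<in> F" if "R \<in> F" for R
  proof -
    have "?P R \<subseteq> U" using that tU unfolding F_def by auto
    moreover have "card (?P R) = r" using that card_image[OF inj_on_subset[OF sw_inj]] unfolding F_def by auto
    ultimately show ?thesis unfolding F_def by auto
  qed
  have bij: "bij_betw ?P F F"
    by (rule bij_betw_byWitness[where f'="?P"]) (use PP PF in auto)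
  have "(\<Sum>R\<in>F. if w \<in> R then 1 / real (card (R \<inter> S')) else 0)
      = (\<Sum>R\<in>F. if w \<in> ?P R then 1 / real (card (?P R \<inter> S')) else 0)"
    using sum.reindex_bij_betw[OF bij, of "\<lambda>R. if w \<in> R then 1 / real (card (R \<inter> S')) else 0"]
    by simp
  also have "\<dots> = (\<Sum>R\<in>F. if v \<in> R then 1 / real (card (R \<inter> S')) else 0)"
  proof (rule sum.cong[OF refl])
    fix R
    have "w \<in> ?P R \<longleftrightarrow> v \<in> R" by (metis sw_sw image_iff sw_def)
    moreover have "?P R \<inter> S' = ?P (R \<inter> S')"
      using tS image_Int[OF sw_inj, of v w R S'] by simp
    moreover have "card (?P (R \<inter> S')) = card (R \<inter> S')"
      by (rule card_image[OF inj_on_subset[OF sw_inj]]) simp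
    ultimately show "(if w \<in> ?P R then 1 / real (card (?P R \<inter> S')) else 0)
        = (if v \<in> R then 1 / real (card (R \<inter> S')) else 0)" by simp
  qed
  finally show ?thesis by simp
qed

lemma comb:
  fixes r :: nat and U S' :: "'a set" and g :: "'a \<Rightarrow> real"
  assumes fin: "finite U" and SU: "S' \<subseteq> U" and g0: "\<And>v. v \<in> U \<Longrightarrow> g v \<ge> 0"
    and r1: "1 \<le> r"
  defines "F \<equiv> {R. R \<subseteq> U \<and> card R = r}"
  shows "real (card {R\<in>F. R \<inter> S' \<noteq> {}}) / real (card S') * (\<Sum>v\<in>S'. g v)
          \<le> (\<Sum>R\<in>F. Max (g ` R))"
proof -
  have finF: "finite F" unfolding F_def using fin by (auto intro: finite_subset[of _ "Pow U"])
  have finS: "finite S'" using fin SU finite_subset by blast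
  define h where "h R = (\<Sum>v\<in>R \<inter> S'. g v) / real (card (R \<inter> S'))" for R
  define c where "c v = (\<Sum>R\<in>F. if v \<in> R then 1 / real (card (R \<inter> S')) else 0)" for v
  have hM: "h R \<le> Max (g ` R)" if R: "R \<in> F" for R
  proof -
    have Rf: "finite R" and RU: "R \<subseteq> U" and Rne: "R \<noteq> {}"
      using R r1 fin finite_subset unfolding F_def by fastforce+
    have le: "g v \<le> Max (g ` R)" if "v \<in> R" for v using Rf that by auto
    show ?thesis
    proof (cases "R \<inter> S' = {}")
      case True
      obtain v where "v \<in> R" using Rne by auto
      thus ?thesis using le[of v] g0[of v] RU True unfolding h_def by auto
    next
      case False
      have "(\<Sum>v\<in>R \<inter> S'. g v) \<le> real (card (R \<inter> S')) * Max (g ` R)"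
        by (rule sum_bounded_above) (use le in auto)
      moreover have "card (R \<inter> S') > 0" using False Rf by (simp add: card_gt_0_iff)
      ultimately show ?thesis unfolding h_def by (simp add: divide_le_eq mult.commute)
    qed
  qed
  have hsum: "(\<Sum>R\<in>F. h R) = (\<Sum>v\<in>S'. g v * c v)"
  proof -
    have "(\<Sum>R\<in>F. h R) = (\<Sum>R\<in>F. \<Sum>v\<in>S'. if v \<in> R then g v / real (card (R \<inter> S')) else 0)"
    proof (rule sum.cong[OF refl])
      fix R
      have "R \<inter> S' = {v\<in>S'. v \<in> R}" by auto
      thus "h R = (\<Sum>v\<in>S'. if v \<in> R then g v / real (card (R \<inter> S')) else 0)"
        unfolding h_def using sum.inter_filter[OF finS, of "\<lambda>v. g v / real (card (R \<inter> S'))" "\<lambda>v. v \<in> R"]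
        by (simp add: sum_divide_distrib)
    qed
    also have "\<dots> = (\<Sum>v\<in>S'. \<Sum>R\<in>F. if v \<in> R then g v / real (card (R \<inter> S')) else 0)"
      by (rule sum.swap)
    also have "\<dots> = (\<Sum>v\<in>S'. g v * c v)" unfolding c_def
      by (rule sum.cong[OF refl]) (simp add: sum_distrib_left if_distrib cong: if_cong)
    finally show ?thesis .
  qed
  have csum: "(\<Sum>v\<in>S'. c v) = real (card {R\<in>F. R \<inter> S' \<noteq> {}})"
  proof -
    have "(\<Sum>v\<in>S'. c v) = (\<Sum>R\<in>F. \<Sum>v\<in>S'. if v \<in> R then 1 / real (card (R \<inter> S')) else 0)"
      unfolding c_def by (rule sum.swap)
    also have "\<dots> = (\<Sum>R\<in>F. if R \<inter> S' \<noteq> {} then 1 else 0)"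
    proof (rule sum.cong[OF refl])
      fix R
      have e: "R \<inter> S' = {v\<in>S'. v \<in> R}" by auto
      have "(\<Sum>v\<in>S'. if v \<in> R then 1 / real (card (R \<inter> S')) else 0)
          = real (card (R \<inter> S')) * (1 / real (card (R \<inter> S')))"
        using sum.inter_filter[OF finS, of "\<lambda>v. 1 / real (card (R \<inter> S'))" "\<lambda>v. v \<in> R"]
        unfolding e[symmetric] by simp
      also have "\<dots> = (if R \<inter> S' \<noteq> {} then 1 else 0)"
        using finS by auto
      finally show "(\<Sum>v\<in>S'. if v \<in> R then 1 / real (card (R \<inter> S')) else 0) = (if R \<inter> S' \<noteq> {} then 1 else 0)" .
    qed
    also have "\<dots> = real (card {R\<in>F. R \<inter> S' \<noteq> {}})"
      using sum.inter_filter[OF finF, of "\<lambda>_. 1::real" "\<lambda>R. R \<inter> S' \<noteq> {}"] by simp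
    finally show ?thesis .
  qed
  show ?thesis
  proof (cases "S' = {}")
    case True
    have "Max (g ` R) \<ge> 0" if "R \<in> F" for R using hM[OF that] unfolding h_def using True by simp
    hence "0 \<le> (\<Sum>R\<in>F. Max (g ` R))" by (simp add: sum_nonneg)
    thus ?thesis using True by simp
  next
    case False
    then obtain v0 where v0: "v0 \<in> S'" by auto
    have cc: "c v = c v0" if "v \<in> S'" for v
      unfolding c_def F_def by (rule sym_count[OF fin SU that v0])
    have "(\<Sum>v\<in>S'. c v) = real (card S') * c v0" using cc by simp
    hence c0: "c v0 = real (card {R\<in>F. R \<inter> S' \<noteq> {}}) / real (card S')"
      using csum False finS by (simp add: field_simps)
    have "(\<Sum>v\<in>S'. g v * c v) = c v0 * (\<Sum>v\<in>S'. g v)"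
      using cc by (simp add: sum_distrib_left mult.commute)
    hence "real (card {R\<in>F. R \<inter> S' \<noteq> {}}) / real (card S') * (\<Sum>v\<in>S'. g v) = (\<Sum>R\<in>F. h R)"
      using hsum c0 by simp
    also have "\<dots> \<le> (\<Sum>R\<in>F. Max (g ` R))" by (rule sum_mono) (rule hM)
    finally show ?thesis .
  qed
qed


lemma miss_bound:
  fixes n s r :: nat
  assumes "s \<le> n" "0 < n"
  shows "real ((n - s) choose r) \<le> real (n choose r) * exp (- (real r * real s / real n))"
  using assms(1)
proof (induction s)
  case 0
  then show ?case by simp
next
  case (Suc s)
  define m where "m = n - s"
  have m1: "m \<ge> 1" and mn: "m \<le> n" using Suc.prems unfolding m_def by auto
  have IH: "real (m choose r) \<le> real (n choose r) * exp (- (real r * real s / real n))"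
    using Suc unfolding m_def by simp
  have eq: "n - Suc s = m - 1" unfolding m_def by simp
  have step: "real ((m - 1) choose r) \<le> real (m choose r) * exp (- (real r / real n))"
  proof (cases "r \<le> m")
    case True
    have "real (m - r) * real (m choose r) = real m * real ((m - 1) choose r)"
      using binomial_absorb_comp[of m r] by (metis of_nat_mult)
    hence e: "real ((m - 1) choose r) = real (m choose r) * (real (m - r) / real m)"
      using m1 by (simp add: field_simps)
    have "real (m - r) / real m = 1 - real r / real m" using True m1 by (simp add: field_simps of_nat_diff)
    also have "\<dots> \<le> 1 - real r / real n" using mn m1 by (simp add: frac_le)
    also have "\<dots> \<le> exp (- (real r / real n))" using exp_ge_add_one_self[of "- (real r / real n)"] by simp
    finally show ?thesis unfolding e by (intro mult_left_mono) auto
  next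
    case False
    hence "m - 1 < r" by simp
    hence z: "(m - 1) choose r = 0" by (rule binomial_eq_0)
    show ?thesis by (subst z) simp
  qed
  have "real (n - Suc s choose r) \<le> real (m choose r) * exp (- (real r / real n))"
    unfolding eq by (rule step)
  also have "\<dots> \<le> real (n choose r) * exp (- (real r * real s / real n)) * exp (- (real r / real n))"
    by (rule mult_right_mono[OF IH]) simp
  also have "\<dots> = real (n choose r) * exp (- (real r * real (Suc s) / real n))"
  proof -
    have "- (real r * real s / real n) + - (real r / real n) = - (real r * real (Suc s) / real n)"
      by (simp add: add_divide_distrib[symmetric] algebra_simps)
    thus ?thesis by (simp only: mult.assoc exp_add[symmetric])
  qed
  finally show ?case .
qed

lemma exp_concave_bound:
  fixes t L :: real
  assumes "0 \<le> t" "t \<le> 1"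
  shows "exp (- (t * L)) \<le> 1 - t * (1 - exp (- L))"
  using convex_onD[OF exp_convex, of t 0 "- L"] assms by (simp add: algebra_simps)

lemma hit_bound:
  fixes n s r k :: nat and \<delta> :: real
  assumes "1 \<le> s" "s \<le> k" "s \<le> n" "0 < \<delta>" "\<delta> < 1"
    and rL: "real n * ln (1 / \<delta>) / real k \<le> real r"
  shows "real (n choose r) * ((1 - \<delta>) * real s / real k) \<le> real (n choose r) - real ((n - s) choose r)"
proof -
  have n0: "0 < n" and k0: "0 < k" using assms by auto
  define L where "L = ln (1 / \<delta>)"
  have L0: "L > 0" unfolding L_def using assms by simp
  have eL: "exp (- L) = \<delta>" unfolding L_def using assms by (simp add: ln_div)
  define t where "t = real s / real k"
  have t01: "0 \<le> t" "t \<le> 1" unfolding t_def using assms by auto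
  have "t * L \<le> real r * real s / real n"
  proof -
    have "real n * L / real k \<le> real r" using rL unfolding L_def .
    hence "real n * L \<le> real r * real k" using k0 by (simp add: divide_le_eq)
    hence "real s * (real n * L) \<le> real s * (real r * real k)" by (intro mult_left_mono) auto
    thus ?thesis unfolding t_def using k0 n0 by (simp add: field_simps)
  qed
  hence "exp (- (real r * real s / real n)) \<le> exp (- (t * L))" by simp
  also have "\<dots> \<le> 1 - t * (1 - \<delta>)" using exp_concave_bound[OF t01, of L] eL by simp
  finally have ex: "exp (- (real r * real s / real n)) \<le> 1 - t * (1 - \<delta>)" .
  have "real ((n - s) choose r) \<le> real (n choose r) * (1 - t * (1 - \<delta>))"
    using miss_bound[OF assms(3) n0, of r] ex by (meson mult_left_mono of_nat_0_le_iff order_trans)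
  thus ?thesis unfolding t_def by (simp add: algebra_simps)
qed


theorem lemma6:
  fixes A :: "real^'nA^'m" and B :: "real^'nB^'m"
    and S T :: "(real^'m) set" and \<delta> :: real and k :: nat
  defines "r \<equiv> nat \<lceil>real CARD('nB) * ln (1 / \<delta>) / real k\<rceil>"
  defines "F \<equiv> {R. R \<subseteq> cols B - T \<and> card R = r}"
  assumes unitA: "\<forall>j. norm (column j A) = 1"
    and unitB: "\<forall>j. norm (column j B) = 1"
    and \<delta>: "0 < \<delta>" "\<delta> < 1"
    and ST: "S \<subseteq> cols B" "T \<subseteq> cols B"
    and fST: "fM A S \<ge> fM A T" "fM A S > 0"
    and Sk: "card S \<le> k"
    and r_le: "r \<le> card (cols B - T)"
  shows "(\<Sum>R\<in>F. Max ((\<lambda>v. fM A (T \<union> {v}) - fM A T) ` R)) / real (card F)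
           \<ge> (1 - \<delta>) * sigma_min S * (fM A S - fM A T)\<^sup>2 / (4 * real k * fM A S)"
proof -
  define U where "U = cols B - T"
  define n where "n = card U"
  define g where "g = (\<lambda>v. fM A (T \<union> {v}) - fM A T)"
  define a where "a = (\<lambda>j. column j A)"
  define fS where "fS = fM A S"
  define fT where "fT = fM A T"
  define \<sigma> where "\<sigma> = sigma_min S"
  define L where "L = ln (1 / \<delta>)"
  have L0: "L > 0" unfolding L_def using \<delta> by simp
  have colsB: "cols B = (\<lambda>j. column j B) ` UNIV" unfolding cols_def by auto
  have finB: "finite (cols B)" unfolding colsB by simp
  have cardB: "card (cols B) \<le> CARD('nB)" unfolding colsB by (rule card_image_le) simp
  have finU: "finite U" unfolding U_def using finB by simp
  have nB: "n \<le> CARD('nB)" unfolding n_def U_def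
    using card_mono[OF finB, of "cols B - T"] cardB by auto
  have finS: "finite S" using ST finB finite_subset by blast
  have unitv: "norm v = 1" if "v \<in> cols B" for v using that unitB unfolding cols_def by auto
  have fMdef: "fM A V = (\<Sum>j\<in>UNIV. (norm (orth_proj V (a j)))\<^sup>2)" for V
    unfolding fM_def a_def ..
  have glow: "(\<Sum>j\<in>UNIV. (inner (a j - orth_proj T (a j)) v)\<^sup>2) \<le> g v" if "v \<in> cols B" for v
  proof -
    have "g v = (\<Sum>j\<in>UNIV. (norm (orth_proj (T \<union> {v}) (a j)))\<^sup>2 - (norm (orth_proj T (a j)))\<^sup>2)"
      unfolding g_def fMdef by (simp add: sum_subtractf)
    moreover have "(\<Sum>j\<in>UNIV. (inner (a j - orth_proj T (a j)) v)\<^sup>2)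
        \<le> (\<Sum>j\<in>UNIV. (norm (orth_proj (T \<union> {v}) (a j)))\<^sup>2 - (norm (orth_proj T (a j)))\<^sup>2)"
      by (rule sum_mono, rule gain_lower) (use unitv[OF that] in simp)
    ultimately show ?thesis by simp
  qed
  have g0: "g v \<ge> 0" if "v \<in> U" for v
    using glow[of v] that unfolding U_def by (smt (verit) sum_nonneg zero_le_power2 DiffD1)
  have Sne: "S \<noteq> {}"
  proof
    assume "S = {}"
    hence "orth_proj S x = 0" for x using op_in[of S x] by simp
    hence "fM A S = 0" unfolding fMdef by simp
    thus False using fST by simp
  qed
  have k0: "k \<ge> 1" using Sk Sne finS by (metis card_0_eq not_less_eq_eq le_zero_eq le_trans One_nat_def)
  have r1: "r \<ge> 1"
  proof -
    have "real CARD('nB) * L / real k > 0" using L0 k0 by simp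
    thus ?thesis unfolding r_def L_def by linarith
  qed
  have rge: "real n * L / real k \<le> real r"
  proof -
    have "real n * L / real k \<le> real CARD('nB) * L / real k"
      using nB L0 k0 by (intro divide_right_mono mult_right_mono) auto
    also have "\<dots> \<le> real r" unfolding r_def L_def by linarith
    finally show ?thesis .
  qed
  have rn: "r \<le> n" using r_le unfolding n_def U_def .
  have FU: "F = {R. R \<subseteq> U \<and> card R = r}" unfolding F_def U_def ..
  have cardF: "card F = n choose r" unfolding FU n_def by (rule n_subsets[OF finU])
  have Cpos: "real (n choose r) > 0" using rn by simp
  have LHS0: "0 \<le> (\<Sum>R\<in>F. Max (g ` R))"
    using comb[OF finU, of "{}" g r] g0 r1 unfolding FU by simp
  have goal_eq: "(1 - \<delta>) * \<sigma> * (fS - fT)\<^sup>2 / (4 * real k * fS) = (1 - \<delta>) * (\<sigma> * (fS - fT)\<^sup>2 / (4 * fS)) / real k"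
    by (simp add: field_simps)
  have main: "(1 - \<delta>) * \<sigma> * (fS - fT)\<^sup>2 / (4 * real k * fS) \<le> (\<Sum>R\<in>F. Max (g ` R)) / real (card F)"
  proof (cases "\<sigma> \<le> 0")
    case True
    have "(1 - \<delta>) * \<sigma> * (fS - fT)\<^sup>2 / (4 * real k * fS) \<le> 0"
      using True \<delta> fST unfolding fS_def
      by (intro divide_nonpos_nonneg mult_nonpos_nonneg mult_nonneg_nonpos) auto
    also have "0 \<le> (\<Sum>R\<in>F. Max (g ` R)) / real (card F)" using LHS0 by simp
    finally show ?thesis .
  next
    case False
    hence s0: "\<sigma> > 0" by simp
    define K where "K = \<sigma> * (fS - fT)\<^sup>2 / (4 * fS)"
    have K0: "K \<ge> 0" unfolding K_def using s0 fST unfolding fS_def by simp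
    define S' where "S' = S - T"
    have S'U: "S' \<subseteq> U" unfolding S'_def U_def using ST by auto
    have finS': "finite S'" using finS unfolding S'_def by simp
    have sk: "card S' \<le> k" unfolding S'_def using card_mono[OF finS, of "S - T"] Sk by auto
    have sumK: "K \<le> (\<Sum>v\<in>S'. g v)"
    proof -
      have "K \<le> \<sigma> * (\<Sum>j\<in>UNIV. (norm (orth_proj S (a j - orth_proj T (a j))))\<^sup>2)"
        unfolding K_def using stepC[of T a S] fST s0 unfolding fMdef fS_def fT_def
        by (simp add: mult_left_mono times_divide_eq_right[symmetric] del: times_divide_eq_right)
      also have "\<dots> = (\<Sum>j\<in>UNIV. \<sigma> * (norm (orth_proj S (a j - orth_proj T (a j))))\<^sup>2)"
        by (simp add: sum_distrib_left)
      also have "\<dots> \<le> (\<Sum>j\<in>UNIV. \<Sum>v\<in>S. (inner (a j - orth_proj T (a j)) v)\<^sup>2)"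
        unfolding \<sigma>_def by (rule sum_mono, rule stepB[OF finS])
      also have "\<dots> = (\<Sum>v\<in>S. \<Sum>j\<in>UNIV. (inner (a j - orth_proj T (a j)) v)\<^sup>2)"
        by (rule sum.swap)
      also have "\<dots> \<le> (\<Sum>v\<in>S. g v)" by (rule sum_mono, rule glow) (use ST in auto)
      also have "\<dots> = (\<Sum>v\<in>S'. g v)" unfolding S'_def
        by (rule sum.mono_neutral_right[OF finS]) (auto simp: g_def insert_absorb)
      finally show ?thesis .
    qed
    show ?thesis
    proof (cases "S' = {}")
      case True
      hence "K \<le> 0" using sumK by simp
      hence "(1 - \<delta>) * \<sigma> * (fS - fT)\<^sup>2 / (4 * real k * fS) \<le> 0"
        unfolding goal_eq K_def[symmetric] using \<delta> k0
        by (intro divide_nonpos_nonneg mult_nonneg_nonpos) auto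
      also have "0 \<le> (\<Sum>R\<in>F. Max (g ` R)) / real (card F)" using LHS0 by simp
      finally show ?thesis .
    next
      case False
      define s where "s = card S'"
      have s1: "s \<ge> 1" unfolding s_def using False finS' by (simp add: Suc_le_eq card_gt_0_iff)
      have sn: "s \<le> n" unfolding s_def n_def by (rule card_mono[OF finU S'U])
      define hit where "hit = card {R\<in>F. R \<inter> S' \<noteq> {}}"
      have c1: "real hit / real s * (\<Sum>v\<in>S'. g v) \<le> (\<Sum>R\<in>F. Max (g ` R))"
        unfolding hit_def s_def FU by (rule comb[OF finU S'U g0 r1])
      have miss: "card {R\<in>F. R \<inter> S' = {}} = (n - s) choose r"
      proof -
        have "{R\<in>F. R \<inter> S' = {}} = {R. R \<subseteq> U - S' \<and> card R = r}" unfolding FU by auto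
        moreover have "card (U - S') = n - s" unfolding n_def s_def
          by (rule card_Diff_subset[OF finS' S'U])
        ultimately show ?thesis using n_subsets[of "U - S'" r] finU by simp
      qed
      have finF: "finite F" unfolding FU using finU by (auto intro: finite_subset[of _ "Pow U"])
      have "card F = hit + card {R\<in>F. R \<inter> S' = {}}"
      proof -
        have "F = {R\<in>F. R \<inter> S' \<noteq> {}} \<union> {R\<in>F. R \<inter> S' = {}}" by auto
        hence "card F = card ({R\<in>F. R \<inter> S' \<noteq> {}} \<union> {R\<in>F. R \<inter> S' = {}})" by simp
        also have "\<dots> = hit + card {R\<in>F. R \<inter> S' = {}}" unfolding hit_def
          by (rule card_Un_disjoint) (use finF in auto)
        finally show ?thesis .
      qed
      hence hitr: "real hit = real (n choose r) - real ((n - s) choose r)" using cardF miss by simp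
      have hb: "real (n choose r) * ((1 - \<delta>) * real s / real k) \<le> real hit"
        unfolding hitr
        by (rule hit_bound[OF s1 _ sn \<delta>]) (use sk s_def rge L_def in auto)
      have hs: "real (n choose r) * (1 - \<delta>) / real k \<le> real hit / real s"
        using hb s1 by (simp add: field_simps)
      have "real (n choose r) * (1 - \<delta>) / real k * K \<le> real hit / real s * K"
        by (rule mult_right_mono[OF hs K0])
      also have "\<dots> \<le> real hit / real s * (\<Sum>v\<in>S'. g v)" by (rule mult_left_mono[OF sumK]) simp
      also have "\<dots> \<le> (\<Sum>R\<in>F. Max (g ` R))" by (rule c1)
      finally have "real (n choose r) * ((1 - \<delta>) * K / real k) \<le> (\<Sum>R\<in>F. Max (g ` R))"
        by (simp add: field_simps)
      hence "(1 - \<delta>) * K / real k \<le> (\<Sum>R\<in>F. Max (g ` R)) / real (card F)"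
        using Cpos cardF by (simp add: pos_le_divide_eq mult.commute)
      thus ?thesis unfolding goal_eq K_def .
    qed
  qed
  thus ?thesis unfolding g_def fS_def fT_def \<sigma>_def .
qed

end
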